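(* Let $(X,Y,Z,W)$ be a solution of system (S) on an interval $(-\infty,t_{max})$. Assume $\lim_{t\to-\infty}(X,Y,Z,W)(t)=(0,0,1,0)$ and $\left|\int_{-\infty}^{T_0}X(t)\,dt\right|<\infty$ for some $T_0$ in the interval. Normalize $g$ so that $g(t)=\lambda e^{\int_{-\infty}^tX(\tau)d\tau}$ with $\lambda>0$, and suppose $Y(t_0)>0$ for some $t_0$. Then $\mathcal L$ is strictly increasing, $\mathcal L>0$, and $0<\int_{-\infty}^{T_0}\mathcal L(t)\,dt<\infty$.
   Context: Fix a positive integer $d$ and a real number $q$. Put $A_2=d(d+2)$ and $A_3=\tfrac14 d(d+2)^2q^2$. System (S) is $$X'=X(dX^2+Z^2-1)+\tfrac{A_2}{d}Y^2-2\tfrac{A_3}{d}W^2,\qquad Y'=Y(dX^2+Z^2-X),$$ $$Z'=Z(dX^2+Z^2-1)+A_3W^2,\qquad W'=W(dX^2+Z^2-2X+Z).$$ For a solution, $g$ denotes a solution of $g'=gX$, determined up to a multiplicative constant, and $\mathcal L=gY$. When $\int_{-\infty}^{T}X\,dt$ is finite, $\lambda:=\lim_{t\to-\infty}g(t)$ exists, and the normalization of $g$ is fixed by choosing $\lambda$. *)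

theory Defs
  imports "HOL-Analysis.Analysis"
begin

definition A2 :: "nat \<Rightarrow> real" where
  "A2 d = real d * (real d + 2)"

definition A3 :: "nat \<Rightarrow> real \<Rightarrow> real" where
  "A3 d q = (1/4) * real d * (real d + 2)^2 * q^2"

definition solves_S :: "nat \<Rightarrow> real \<Rightarrow> real set \<Rightarrow>
    (real \<Rightarrow> real) \<Rightarrow> (real \<Rightarrow> real) \<Rightarrow> (real \<Rightarrow> real) \<Rightarrow> (real \<Rightarrow> real) \<Rightarrow> bool" where
  "solves_S d q I X Y Z W \<longleftrightarrow> (\<forall>t\<in>I.
     (X has_real_derivative
        X t * (real d * (X t)^2 + (Z t)^2 - 1) + A2 d / real d * (Y t)^2
          - 2 * A3 d q / real d * (W t)^2) (at t) \<and>
     (Y has_real_derivative Y t * (real d * (X t)^2 + (Z t)^2 - X t)) (at t) \<and>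
     (Z has_real_derivative
        Z t * (real d * (X t)^2 + (Z t)^2 - 1) + A3 d q * (W t)^2) (at t) \<and>
     (W has_real_derivative
        W t * (real d * (X t)^2 + (Z t)^2 - 2 * X t + Z t)) (at t))"

definition int_minf :: "(real \<Rightarrow> real) \<Rightarrow> real \<Rightarrow> real" where
  "int_minf f t = Lim at_bot (\<lambda>s. integral {s..t} f)"

definition int_minf_converges :: "(real \<Rightarrow> real) \<Rightarrow> real \<Rightarrow> bool" where
  "int_minf_converges f t \<longleftrightarrow> (\<exists>c. ((\<lambda>s. integral {s..t} f) \<longlongrightarrow> c) at_bot)"

end

theory Submission
  imports Defs
begin

lemma lin_pos:
  fixes f b :: "real \<Rightarrow> real"
  assumes der: "\<And>x. a < x \<Longrightarrow> x < c \<Longrightarrow> (f has_real_derivative f x * b x) (at x)"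
    and contb: "continuous_on {a<..<c} b"
    and x: "a < x" "x < c" and y: "a < y" "y < c" and fx: "f x > 0"
  shows "f y > 0"
proof -
  define p where "p = (a + min x y)/2"
  define r where "r = (max x y + c)/2"
  have pr: "a < p" "p < min x y" "max x y < r" "r < c" using x y by (auto simp: p_def r_def)
  have cb: "continuous_on {p..r} b"
    by (rule continuous_on_subset[OF contb]) (use pr in auto)
  define B where "B u = integral {p..u} b" for u
  define h where "h u = f u * exp (- B u)" for u
  have dB: "(B has_real_derivative b u) (at u)" if "p < u" "u < r" for u
  proof -
    have "(B has_real_derivative b u) (at u within {p..r})"
      unfolding B_def by (rule integral_has_real_derivative[OF cb]) (use that in auto)
    moreover have "at u within {p..r} = at u" by (rule at_within_interior) (use that in simp)
    ultimately show ?thesis by simp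
  qed
  have dh: "(h has_real_derivative 0) (at u)" if "p < u" "u < r" for u
  proof -
    have e: "((\<lambda>u. exp (- B u)) has_real_derivative exp (- B u) * (- b u)) (at u)"
      by (rule DERIV_chain2[OF DERIV_exp DERIV_minus[OF dB[OF that]]])
    have fd: "(f has_real_derivative f u * b u) (at u)" using der that pr by simp
    have "(h has_real_derivative f u * b u * exp (- B u) + exp (- B u) * (- b u) * f u) (at u)"
      unfolding h_def by (rule DERIV_mult[OF fd e])
    then show ?thesis by (simp add: algebra_simps)
  qed
  have "h y = h x" by (rule DERIV_isconst3[of p r]) (use dh pr in auto)
  moreover have "h x > 0" using fx by (simp add: h_def)
  ultimately have "f y * exp (- B y) > 0" by (simp add: h_def)
  then show ?thesis by (simp add: zero_less_mult_iff)
qed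

lemma int_shift:
  fixes f :: "real \<Rightarrow> real" and a b c :: real
  assumes cont: "continuous_on {..b} f" and ab: "a \<le> b"
  shows "((\<lambda>s. integral {s..b} f) \<longlongrightarrow> c) at_bot \<longleftrightarrow>
         ((\<lambda>s. integral {s..a} f) \<longlongrightarrow> c - integral {a..b} f) at_bot"
proof -
  have ev: "eventually (\<lambda>s. integral {s..a} f = integral {s..b} f - integral {a..b} f) at_bot"
    using eventually_le_at_bot[of a]
  proof (rule eventually_mono)
    fix s assume s: "s \<le> a"
    have "f integrable_on {s..b}"
      by (rule integrable_continuous_interval, rule continuous_on_subset[OF cont]) auto
    then show "integral {s..a} f = integral {s..b} f - integral {a..b} f"
      using Henstock_Kurzweil_Integration.integral_combine[where a=s and c=a and b=b and f=f] s ab by simp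
  qed
  have "((\<lambda>s. integral {s..a} f) \<longlongrightarrow> c - integral {a..b} f) at_bot \<longleftrightarrow>
        ((\<lambda>s. integral {s..b} f - integral {a..b} f) \<longlongrightarrow> c - integral {a..b} f) at_bot"
    by (rule tendsto_cong[OF ev])
  also have "\<dots> \<longleftrightarrow> ((\<lambda>s. integral {s..b} f) \<longlongrightarrow> c) at_bot"
  proof
    assume "((\<lambda>s. integral {s..b} f - integral {a..b} f) \<longlongrightarrow> c - integral {a..b} f) at_bot"
    from tendsto_add[OF this tendsto_const[of "integral {a..b} f"]] show "((\<lambda>s. integral {s..b} f) \<longlongrightarrow> c) at_bot" by simp
  qed (intro tendsto_intros)
  finally show ?thesis by simp
qed


theorem proposition2p2:
  fixes d :: nat and q :: real and tmax :: ereal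
    and X Y Z W :: "real \<Rightarrow> real" and lam T0 t0 :: real
  defines "I \<equiv> {t. ereal t < tmax}"
  defines "g \<equiv> (\<lambda>t. lam * exp (int_minf X t))"
  defines "L \<equiv> (\<lambda>t. g t * Y t)"
  assumes d_pos: "d > 0"
    and sol: "solves_S d q I X Y Z W"
    and limX: "(X \<longlongrightarrow> 0) at_bot" and limY: "(Y \<longlongrightarrow> 0) at_bot"
    and limZ: "(Z \<longlongrightarrow> 1) at_bot" and limW: "(W \<longlongrightarrow> 0) at_bot"
    and T0: "T0 \<in> I" and intX: "int_minf_converges X T0"
    and lam: "lam > 0"
    and t0: "t0 \<in> I" and Yt0: "Y t0 > 0"
  shows "strict_mono_on I L \<and> (\<forall>t\<in>I. L t > 0) \<and>
         int_minf_converges L T0 \<and> int_minf L T0 > 0"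
proof -
  define b where "b t = real d * (X t)^2 + (Z t)^2" for t
  have dX: "(X has_real_derivative
        X t * (real d * (X t)^2 + (Z t)^2 - 1) + A2 d / real d * (Y t)^2
          - 2 * A3 d q / real d * (W t)^2) (at t)" if "t \<in> I" for t
    using sol that unfolding solves_S_def by blast
  have dY: "(Y has_real_derivative Y t * (real d * (X t)^2 + (Z t)^2 - X t)) (at t)" if "t \<in> I" for t
    using sol that unfolding solves_S_def by blast
  have dZ: "(Z has_real_derivative
        Z t * (real d * (X t)^2 + (Z t)^2 - 1) + A3 d q * (W t)^2) (at t)" if "t \<in> I" for t
    using sol that unfolding solves_S_def by blast
  have downI: "s \<in> I" if "s \<le> t" "t \<in> I" for s t
  proof -
    have "ereal s \<le> ereal t" using that by simp
    moreover have "ereal t < tmax" using that(2) by (simp add: I_def)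
    ultimately have "ereal s < tmax" by (rule order.strict_trans1)
    then show ?thesis by (simp add: I_def)
  qed
  have upI: "\<exists>c. t < c \<and> c \<in> I" if "t \<in> I" for t
  proof -
    from that have "ereal t < tmax" by (simp add: I_def)
    from ereal_dense2[OF this] obtain z where "ereal t < ereal z" "ereal z < tmax" by blast
    then show ?thesis by (auto simp: I_def)
  qed
  have subI: "{..t} \<subseteq> I" if "t \<in> I" for t using downI that by auto
  have contX: "continuous_on I X"
    by (rule continuous_at_imp_continuous_on) (use dX DERIV_isCont in blast)
  have contY: "continuous_on I Y"
    by (rule continuous_at_imp_continuous_on) (use dY DERIV_isCont in blast)
  have contZ: "continuous_on I Z"
    by (rule continuous_at_imp_continuous_on) (use dZ DERIV_isCont in blast)
  have contb: "continuous_on I b"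
    unfolding b_def by (intro continuous_intros contX contZ)
  obtain c0 where c0: "((\<lambda>s. integral {s..T0} X) \<longlongrightarrow> c0) at_bot"
    using intX unfolding int_minf_converges_def by blast
  have convX: "int_minf_converges X t" if t: "t \<in> I" for t
  proof (cases "t \<le> T0")
    case True
    have "continuous_on {..T0} X" using contX subI[OF T0] continuous_on_subset by blast
    from int_shift[OF this True] c0 show ?thesis unfolding int_minf_converges_def by blast
  next
    case False
    have "continuous_on {..t} X" using contX subI[OF t] continuous_on_subset by blast
    from int_shift[OF this, of T0 "c0 + integral {T0..t} X"] c0 False
    show ?thesis unfolding int_minf_converges_def by auto
  qed
  have intX_eq: "int_minf X t = int_minf X a + integral {a..t} X"
    if at: "a \<le> t" "t \<in> I" for a t
  proof -
    obtain c where c: "((\<lambda>s. integral {s..t} X) \<longlongrightarrow> c) at_bot"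
      using convX[OF at(2)] unfolding int_minf_converges_def by blast
    have "continuous_on {..t} X" using contX subI[OF that(2)] continuous_on_subset by blast
    from int_shift[OF this that(1)] c
    have ca: "((\<lambda>s. integral {s..a} X) \<longlongrightarrow> c - integral {a..t} X) at_bot" by blast
    have "int_minf X t = c" unfolding int_minf_def by (rule tendsto_Lim[OF _ c]) simp
    moreover have "int_minf X a = c - integral {a..t} X" unfolding int_minf_def by (rule tendsto_Lim[OF _ ca]) simp
    ultimately show ?thesis by simp
  qed
  have dL: "(L has_real_derivative L t * b t) (at t)" if t: "t \<in> I" for t
  proof -
    obtain c where c: "t < c" "c \<in> I" using upI[OF t] by blast
    define a where "a = t - 1"
    define K where "K = int_minf X a"
    define G where "G u = lam * exp (K + integral {a..u} X) * Y u" for u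
    have "{a..c} \<subseteq> I" using subI[OF c(2)] by auto
    then have cX: "continuous_on {a..c} X" by (rule continuous_on_subset[OF contX])
    have dF: "((\<lambda>u. integral {a..u} X) has_real_derivative X t) (at t)"
    proof -
      have "((\<lambda>u. integral {a..u} X) has_real_derivative X t) (at t within {a..c})"
        by (rule integral_has_real_derivative[OF cX]) (use c in \<open>auto simp: a_def\<close>)
      moreover have "at t within {a..c} = at t" by (rule at_within_interior) (use c in \<open>simp add: a_def\<close>)
      ultimately show ?thesis by simp
    qed
    have e: "((\<lambda>u. exp (K + integral {a..u} X)) has_real_derivative exp (K + integral {a..t} X) * (0 + X t)) (at t)"
      by (rule DERIV_chain2[OF DERIV_exp DERIV_add[OF DERIV_const dF]])
    have "((\<lambda>u. lam * exp (K + integral {a..u} X)) has_real_derivative lam * (exp (K + integral {a..t} X) * (0 + X t))) (at t)"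
      by (rule DERIV_cmult[OF e])
    from DERIV_mult[OF this dY[OF t]]
    have dG: "(G has_real_derivative L t * b t) (at t)"
    proof -
      assume h: "((\<lambda>x. lam * exp (K + integral {a..x} X) * Y x) has_real_derivative
         lam * (exp (K + integral {a..t} X) * (0 + X t)) * Y t +
         Y t * (real d * (X t)\<^sup>2 + (Z t)\<^sup>2 - X t) * (lam * exp (K + integral {a..t} X))) (at t)"
      have "L t = lam * exp (K + integral {a..t} X) * Y t"
        using intX_eq[of a t] t unfolding L_def g_def K_def a_def by simp
      then have "lam * (exp (K + integral {a..t} X) * (0 + X t)) * Y t +
         Y t * (real d * (X t)\<^sup>2 + (Z t)\<^sup>2 - X t) * (lam * exp (K + integral {a..t} X)) = L t * b t"
        unfolding b_def by (simp add: algebra_simps)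
      with h show ?thesis unfolding G_def by simp
    qed
    show ?thesis
    proof (rule has_field_derivative_transform_within_open[OF dG, of "{a<..<c}"])
      show "t \<in> {a<..<c}" using c by (simp add: a_def)
      fix x assume x: "x \<in> {a<..<c}"
      then have "x \<in> I" using downI[of x c] c by auto
      then show "G x = L x" using intX_eq[of a x] x unfolding L_def g_def K_def G_def by simp
    qed simp
  qed
  have gpos: "g t > 0" for t using lam by (simp add: g_def)
  have Lpos: "L t > 0" if t: "t \<in> I" for t
  proof -
    have "max t t0 \<in> I" using t t0 by (simp add: max_def)
    then obtain c where c: "max t t0 < c" "c \<in> I" using upI by blast
    define a where "a = min t t0 - 1"
    have sub: "{a<..<c} \<subseteq> I" using subI[OF c(2)] by auto
    show ?thesis
    proof (rule lin_pos[of a c L b t0 t])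
      show "\<And>x. a < x \<Longrightarrow> x < c \<Longrightarrow> (L has_real_derivative L x * b x) (at x)"
        using dL sub by auto
      show "continuous_on {a<..<c} b" using contb sub continuous_on_subset by blast
      show "0 < L t0" using gpos Yt0 by (simp add: L_def)
    qed (use c in \<open>auto simp: a_def\<close>)
  qed
  have Ypos: "Y t > 0" if "t \<in> I" for t
    using Lpos[OF that] gpos[of t] unfolding L_def by (simp add: zero_less_mult_iff)
  have bnn: "b t \<ge> 0" for t unfolding b_def by simp
  have mono: "strict_mono_on I L"
  proof (rule strict_mono_onI)
    fix x y assume x: "x \<in> I" and y: "y \<in> I" and xy: "x < y"
    have Iint: "{..y} \<subseteq> I" using subI[OF y] by auto
    have nd: "L u \<le> L v" if uv: "x \<le> u" "u \<le> v" "v \<le> y" for u v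
    proof (rule DERIV_nonneg_imp_nondecreasing[OF uv(2)])
      fix w assume w: "u \<le> w" "w \<le> v"
      then have "w \<in> I" using Iint uv by auto
      then show "\<exists>z. (L has_real_derivative z) (at w) \<and> 0 \<le> z"
        using dL[of w] Lpos[of w] bnn[of w] by (intro exI[of _ "L w * b w"]) simp
    qed
    show "L x < L y"
    proof (rule ccontr)
      assume "\<not> L x < L y"
      then have le: "L y \<le> L x" by simp
      have const: "L u = L x" if "u \<in> {x<..<y}" for u
        using nd[of x u] nd[of u y] le that by force
      have zero: "X u = 0 \<and> Z u = 0" if u: "u \<in> {x<..<y}" for u
      proof -
        have uI: "u \<in> I" using Iint u by auto
        have "((\<lambda>_. L x) has_real_derivative 0) (at u)" by simp
        then have "(L has_real_derivative 0) (at u)"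
          by (rule has_field_derivative_transform_within_open[of _ _ _ "{x<..<y}"]) (use u const in auto)
        with dL[OF uI] have "L u * b u = 0" by (rule DERIV_unique)
        then have "b u = 0" using Lpos[OF uI] by simp
        moreover have "real d * (X u)^2 \<ge> 0" "(Z u)^2 \<ge> 0" by simp_all
        ultimately have "real d * (X u)^2 = 0" "(Z u)^2 = 0" unfolding b_def by linarith+
        then show ?thesis using d_pos by simp
      qed
      define m where "m = (x+y)/2"
      have m: "m \<in> {x<..<y}" "m \<in> I" using xy Iint by (auto simp: m_def)
      have "((\<lambda>_. 0) has_real_derivative 0) (at m)" by simp
      then have dX0: "(X has_real_derivative 0) (at m)"
        by (rule has_field_derivative_transform_within_open[of _ _ _ "{x<..<y}"]) (use m zero in auto)
      have "((\<lambda>_. 0) has_real_derivative 0) (at m)" by simp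
      then have dZ0: "(Z has_real_derivative 0) (at m)"
        by (rule has_field_derivative_transform_within_open[of _ _ _ "{x<..<y}"]) (use m zero in auto)
      have "Z m * (real d * (X m)^2 + (Z m)^2 - 1) + A3 d q * (W m)^2 = 0"
        by (rule DERIV_unique[OF dZ[OF m(2)] dZ0])
      then have A3W: "A3 d q * (W m)^2 = 0" using zero[OF m(1)] by simp
      have "X m * (real d * (X m)^2 + (Z m)^2 - 1) + A2 d / real d * (Y m)^2
          - 2 * A3 d q / real d * (W m)^2 = 0"
        by (rule DERIV_unique[OF dX[OF m(2)] dX0])
      then have e2: "A2 d / real d * (Y m)^2 - 2 * A3 d q / real d * (W m)^2 = 0"
        using zero[OF m(1)] by simp
      have "2 * A3 d q / real d * (W m)^2 = 2 / real d * (A3 d q * (W m)^2)" by simp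
      also have "\<dots> = 0" by (simp only: A3W)
      finally have "A2 d / real d * (Y m)^2 = 0" using e2 by linarith
      moreover have "A2 d / real d * (Y m)^2 > 0"
        using d_pos Ypos[OF m(2)] by (simp add: A2_def)
      ultimately show False by linarith
    qed
  qed
  have conv: "int_minf_converges L T0 \<and> int_minf L T0 > 0"
  proof -
    have "eventually (\<lambda>t. 3/4 < Z t) at_bot" by (rule order_tendstoD(1)[OF limZ]) simp
    then obtain N where N: "\<And>t. t \<le> N \<Longrightarrow> 3/4 < Z t"
      unfolding eventually_at_bot_linorder by blast
    define T1 where "T1 = min N T0"
    have T1I: "T1 \<in> I" using downI[OF _ T0] by (simp add: T1_def)
    have T1T0: "T1 \<le> T0" by (simp add: T1_def)
    have contL: "continuous_on I L"
      by (rule continuous_at_imp_continuous_on) (use dL DERIV_isCont in blast)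
    have cL: "continuous_on {u..v} L" if "v \<in> I" for u v
      by (rule continuous_on_subset[OF contL]) (use subI[OF that] in auto)
    have iL: "L integrable_on {u..v}" if "v \<in> I" for u v
      by (rule integrable_continuous_interval[OF cL[OF that]])
    have bbig: "L u \<le> 2 * (L u * b u)" if u: "u \<le> T1" for u
    proof -
      have uI: "u \<in> I" using downI[OF u T1I] .
      have "3/4 < Z u" using N u by (simp add: T1_def)
      then have "(3/4::real)^2 < (Z u)^2" by (intro power_strict_mono) auto
      moreover have "real d * (X u)^2 \<ge> 0" by simp
      moreover have "(3/4::real)^2 = 9/16" by (simp add: power2_eq_square)
      ultimately have "1/2 \<le> b u" unfolding b_def by linarith
      then have "L u * (1/2) \<le> L u * b u" using Lpos[OF uI] by (intro mult_left_mono) auto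
      then show ?thesis by linarith
    qed
    have bound: "integral {s..T1} L \<le> 2 * L T1" if s: "s \<le> T1" for s
    proof -
      have "((\<lambda>u. L u * b u) has_integral L T1 - L s) {s..T1}"
      proof (rule fundamental_theorem_of_calculus[OF s])
        fix x assume "x \<in> {s..T1}"
        then have "x \<in> I" using downI[OF _ T1I] by auto
        then show "(L has_vector_derivative L x * b x) (at x within {s..T1})"
          using dL[of x] by (simp add: has_real_derivative_iff_has_vector_derivative[symmetric] has_field_derivative_at_within)
      qed
      then have i2: "((\<lambda>u. 2 * (L u * b u)) has_integral 2 * (L T1 - L s)) {s..T1}"
        by (rule has_integral_mult_right)
      have i1: "(L has_integral integral {s..T1} L) {s..T1}" using iL[OF T1I] by blast
      have "integral {s..T1} L \<le> 2 * (L T1 - L s)"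
        by (rule has_integral_le[OF i1 i2]) (use bbig in auto)
      moreover have "L s > 0" using Lpos downI[OF s T1I] by blast
      moreover have "2 * (L T1 - L s) = 2 * L T1 - 2 * L s" by simp
      ultimately show ?thesis by linarith
    qed
    define F where "F s = integral {s..T0} L" for s
    have Fsplit: "F s = integral {s..v} L + F v" if "s \<le> v" "v \<le> T0" for s v
      using Henstock_Kurzweil_Integration.integral_combine[where a=s and c=v and b=T0 and f=L]
        iL[OF T0, of s] that unfolding F_def by simp
    have Fanti: "F v \<le> F s" if "s \<le> v" "v \<le> T0" for s v
    proof -
      have "0 \<le> integral {s..v} L"
      proof (rule integral_nonneg)
        show "L integrable_on {s..v}" using iL[OF downI[OF that(2) T0]] .
        fix x assume "x \<in> {s..v}"
        then show "0 \<le> L x" using Lpos downI[OF _ downI[OF that(2) T0], of x] by (auto intro: less_imp_le)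
      qed
      then show ?thesis using Fsplit[OF that] by linarith
    qed
    define M where "M = 2 * L T1 + F T1"
    have Fbd: "F s \<le> M" if "s \<in> {..T1}" for s
      using Fsplit[of s T1] bound[of s] that T1T0 unfolding M_def by auto
    have bdd: "bdd_above (F ` {..T1})" by (rule bdd_aboveI2[of _ _ M]) (rule Fbd)
    define c where "c = (SUP s\<in>{..T1}. F s)"
    have lim: "(F \<longlongrightarrow> c) at_bot"
    proof (rule order_tendstoI)
      fix a assume "a < c"
      then obtain s0 where s0: "s0 \<le> T1" "a < F s0"
        using less_cSUP_iff[of "{..T1}" F a] bdd by (auto simp: c_def)
      show "eventually (\<lambda>s. a < F s) at_bot"
        unfolding eventually_at_bot_linorder
      proof (intro exI allI impI)
        fix s assume "s \<le> s0"
        then have "F s0 \<le> F s" using Fanti[of s s0] s0 T1T0 by auto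
        then show "a < F s" using s0 by linarith
      qed
    next
      fix a assume "c < a"
      show "eventually (\<lambda>s. F s < a) at_bot"
        unfolding eventually_at_bot_linorder
      proof (intro exI allI impI)
        fix s assume "s \<le> T1"
        then have "F s \<le> c" unfolding c_def by (intro cSUP_upper bdd) auto
        then show "F s < a" using \<open>c < a\<close> by linarith
      qed
    qed
    have c1: "int_minf_converges L T0"
      unfolding int_minf_converges_def using lim unfolding F_def by blast
    have c2: "int_minf L T0 = c"
      unfolding int_minf_def using tendsto_Lim[OF _ lim] unfolding F_def by simp
    have T1mI: "T1 - 1 \<in> I" using downI[OF _ T1I] by simp
    have "L (T1 - 1) \<le> integral {T1 - 1..T1} L"
    proof -
      have "integral {T1 - 1..T1} (\<lambda>_. L (T1 - 1)) \<le> integral {T1 - 1..T1} L"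
      proof (rule integral_le)
        show "L integrable_on {T1 - 1..T1}" using iL[OF T1I] .
        fix x assume x: "x \<in> {T1 - 1..T1}"
        show "L (T1 - 1) \<le> L x"
        proof (cases "x = T1 - 1")
          case False
          then have "T1 - 1 < x" using x by auto
          moreover have "x \<in> I" using downI[OF _ T1I] x by auto
          ultimately show ?thesis using strict_mono_onD[OF mono T1mI] by (auto intro: less_imp_le)
        qed simp
      qed (rule integrable_const_ivl)
      then show ?thesis by simp
    qed
    moreover have "L (T1 - 1) > 0" using Lpos[OF T1mI] .
    moreover have "F (T1 - 1) = integral {T1 - 1..T1} L + F T1" using Fsplit[of "T1 - 1" T1] T1T0 by simp
    moreover have "0 \<le> F T1" using Fanti[of T1 T0] T1T0 by (simp add: F_def)
    moreover have "F (T1 - 1) \<le> c" unfolding c_def by (intro cSUP_upper bdd) auto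
    ultimately have "c > 0" by linarith
    then show ?thesis using c1 c2 by simp
  qed
  show ?thesis using mono Lpos conv by blast
qed

end
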